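(* Let $d\ge1$, $I=[0,1]$, and for $v\in\{0,2\}^d$ let $h_v(\mathbf{x})=(\mathbf{x}+v)/3$; for a word $w=(v_1,\dots,v_n)\in(\{0,2\}^d)^n$ write $h_w=h_{v_1}\circ\cdots\circ h_{v_n}$. There exists a constant $C_d$ depending only on $d$ such that for every affine hyperplane $\mathcal{L}\subseteq\mathbb{R}^d$ and every $n\in\mathbb{N}$, with $\varepsilon=3^{-n}$, the open $\varepsilon$-neighborhood $\mathcal{L}^{(\varepsilon)}$ intersected with $\mathcal{C}^d$ can be covered by at most $C_d2^{(d-1)n}$ cubes of the form $h_w(I^d)$ with $w\in(\{0,2\}^d)^n$.
   Context: $\mathcal{C}$ is the middle-thirds Cantor set; $\mathcal{C}^d$ is the limit set of the maps $h_v$, $v\in\{0,2\}^d$. $\mathcal{L}^{(\varepsilon)}$ denotes the open Euclidean $\varepsilon$-neighborhood of $\mathcal{L}$. *)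

theory Defs
  imports "HOL-Analysis.Analysis"
begin

definition digits :: "(real ^ 'n) set" where
  "digits = {v. \<forall>i. v $ i \<in> {0, 2}}"

definition hmap :: "real ^ 'n \<Rightarrow> real ^ 'n \<Rightarrow> real ^ 'n" where
  "hmap v x = (1/3) *\<^sub>R (x + v)"

definition words :: "nat \<Rightarrow> (real ^ 'n) list set" where
  "words n = {w. length w = n \<and> set w \<subseteq> digits}"

definition hword :: "(real ^ 'n) list \<Rightarrow> real ^ 'n \<Rightarrow> real ^ 'n" where
  "hword w = foldr (\<lambda>v f. hmap v \<circ> f) w id"

definition unit_cube :: "(real ^ 'n) set" where
  "unit_cube = {x. \<forall>i. 0 \<le> x $ i \<and> x $ i \<le> 1}"

definition cantor_d :: "(real ^ 'n) set" where
  "cantor_d = (\<Inter>n. \<Union>w\<in>words n. hword w ` unit_cube)"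

definition affine_hyperplane :: "(real ^ 'n) set \<Rightarrow> bool" where
  "affine_hyperplane L \<longleftrightarrow> (\<exists>a b. a \<noteq> 0 \<and> L = {x. a \<bullet> x = b})"

definition open_nbhd :: "(real ^ 'n) set \<Rightarrow> real \<Rightarrow> (real ^ 'n) set" where
  "open_nbhd L e = {x. \<exists>y\<in>L. dist x y < e}"

end

theory Submission
  imports Defs
begin

lemma hword_Nil: "hword [] = id"
  by (simp add: hword_def)

lemma hword_Cons: "hword (v # w) = hmap v \<circ> hword w"
  by (simp add: hword_def)

lemma hword_affine: "hword w x = (1/3) ^ length w *\<^sub>R x + hword w 0"
proof (induction w)
  case Nil
  then show ?case by (simp add: hword_Nil)
next
  case (Cons v w)
  have "hword (v # w) x = (1/3) *\<^sub>R (hword w x + v)"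
    by (simp add: hword_Cons hmap_def)
  also have "\<dots> = (1/3) *\<^sub>R ((1/3) ^ length w *\<^sub>R x + hword w 0 + v)"
    using Cons by simp
  also have "\<dots> = (1/3) ^ length (v # w) *\<^sub>R x + (1/3) *\<^sub>R (hword w 0 + v)"
    by (simp add: algebra_simps)
  also have "(1/3) *\<^sub>R (hword w 0 + v) = hword (v # w) 0"
    by (simp add: hword_Cons hmap_def)
  finally show ?case .
qed

fun ival :: "real list \<Rightarrow> real" where
  "ival [] = 0"
| "ival (d # ds) = d * 3 ^ length ds + ival ds"

lemma hword0_comp: "(hword w 0) $ i = ival (map (\<lambda>v. v $ i) w) / 3 ^ length w"
proof (induction w)
  case Nil
  then show ?case by (simp add: hword_Nil)
next
  case (Cons v w)
  have "(hword (v # w) 0) $ i = ((hword w 0) $ i + v $ i) / 3"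
    by (simp add: hword_Cons hmap_def)
  also have "\<dots> = (ival (map (\<lambda>v. v $ i) w) / 3 ^ length w + v $ i) / 3"
    using Cons by simp
  also have "\<dots> = ival (map (\<lambda>v. v $ i) (v # w)) / 3 ^ length (v # w)"
    by (simp add: field_simps)
  finally show ?case .
qed

lemma ival_Ints: "set ds \<subseteq> {0, 2} \<Longrightarrow> ival ds \<in> \<int>"
  by (induction ds) auto

lemma ival_bound: "set ds \<subseteq> {0, 2} \<Longrightarrow> 0 \<le> ival ds \<and> ival ds \<le> 3 ^ length ds - 1"
  by (induction ds) auto

lemma ival_inj:
  "set xs \<subseteq> {0, 2} \<Longrightarrow> set ys \<subseteq> {0, 2} \<Longrightarrow> length xs = length ys
   \<Longrightarrow> ival xs = ival ys \<Longrightarrow> xs = ys"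
proof (induction xs arbitrary: ys)
  case Nil
  then show ?case by simp
next
  case (Cons x xs)
  then obtain y ys' where ys: "ys = y # ys'" by (cases ys) auto
  have b1: "0 \<le> ival xs \<and> ival xs \<le> 3 ^ length xs - 1" using Cons ival_bound by auto
  have b2: "0 \<le> ival ys' \<and> ival ys' \<le> 3 ^ length xs - 1" using Cons ival_bound ys by auto
  have e: "x * 3 ^ length xs + ival xs = y * 3 ^ length xs + ival ys'"
    using Cons ys by simp
  have xy: "x \<in> {0,2}" "y \<in> {0,2}" using Cons ys by auto
  have p: "(3::real) ^ length xs > 0" by simp
  have "x = y"
  proof (rule ccontr)
    assume "x \<noteq> y"
    then have "x - y = 2 \<or> y - x = 2" using xy by auto
    then show False using e b1 b2 p by (auto simp: algebra_simps)
  qed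
  then have "ival xs = ival ys'" using e by simp
  moreover have "set xs \<subseteq> {0,2}" "set ys' \<subseteq> {0,2}" "length xs = length ys'"
    using Cons.prems ys by auto
  ultimately have "xs = ys'" using Cons.IH by blast
  then show ?case using \<open>x = y\<close> ys by simp
qed

lemma key_geom:
  fixes a :: "real^'n" and w w0 :: "(real^'n) list"
  assumes amax: "\<And>j. \<bar>a$j\<bar> \<le> \<bar>a$i0\<bar>" and apos: "\<bar>a$i0\<bar> > 0"
  and lens: "length w = n" "length w0 = n"
  and same: "\<And>j. j \<noteq> i0 \<Longrightarrow> (hword w 0)$j = (hword w0 0)$j"
  and m1: "x \<in> hword w ` unit_cube" "a \<bullet> y = b" "dist x y < (1/3)^n"
  and m2: "x0 \<in> hword w0 ` unit_cube" "a \<bullet> y0 = b" "dist x0 y0 < (1/3)^n"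
  shows "\<bar>(hword w 0)$i0 - (hword w0 0)$i0\<bar> \<le> 3 * CARD('n) * (1/3)^n"
proof -
  define e :: real where "e = (1/3)^n"
  define c where "c = hword w 0"
  define c0 where "c0 = hword w0 0"
  define d :: real where "d = real CARD('n)"
  have e0: "e > 0" by (simp add: e_def)
  obtain u where u: "u \<in> unit_cube" "x = hword w u" using m1 by auto
  obtain u0 where u0: "u0 \<in> unit_cube" "x0 = hword w0 u0" using m2 by auto
  have xu: "x = e *\<^sub>R u + c" using u lens by (simp add: hword_affine[of w u] e_def c_def)
  have xu0: "x0 = e *\<^sub>R u0 + c0" using u0 lens by (simp add: hword_affine[of w0 u0] e_def c0_def)
  have cs: "\<And>z y. a \<bullet> y = b \<Longrightarrow> dist z y < e \<Longrightarrow> \<bar>a \<bullet> z - b\<bar> \<le> norm a * e"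
  proof -
    fix z y assume h: "a \<bullet> y = b" "dist z y < e"
    have "\<bar>a \<bullet> z - b\<bar> = \<bar>a \<bullet> (z - y)\<bar>" using h by (simp add: inner_diff_right)
    also have "\<dots> \<le> norm a * norm (z - y)" by (rule Cauchy_Schwarz_ineq2)
    also have "\<dots> \<le> norm a * e" using h by (intro mult_left_mono) (auto simp: dist_norm)
    finally show "\<bar>a \<bullet> z - b\<bar> \<le> norm a * e" .
  qed
  have ax: "\<bar>a \<bullet> x - b\<bar> \<le> norm a * e" using cs m1 e_def by blast
  have ax0: "\<bar>a \<bullet> x0 - b\<bar> \<le> norm a * e" using cs m2 e_def by blast
  have suma: "(\<Sum>j\<in>UNIV. \<bar>a$j\<bar>) \<le> d * \<bar>a$i0\<bar>"
    using sum_bounded_above[of UNIV "\<lambda>j. \<bar>a$j\<bar>" "\<bar>a$i0\<bar>"] amax by (simp add: d_def)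
  have na: "norm a \<le> d * \<bar>a$i0\<bar>" using norm_le_l1_cart[of a] suma by linarith
  have cdiff: "c - c0 = (c$i0 - c0$i0) *\<^sub>R axis i0 1"
    using same by (auto simp: vec_eq_iff axis_def c_def c0_def)
  have ac: "a \<bullet> (c - c0) = a$i0 * (c$i0 - c0$i0)"
    by (subst cdiff) (simp add: inner_axis)
  have au: "\<bar>a \<bullet> (u - u0)\<bar> \<le> d * \<bar>a$i0\<bar>"
  proof -
    have "\<bar>a \<bullet> (u - u0)\<bar> = \<bar>\<Sum>j\<in>UNIV. a$j * (u - u0)$j\<bar>" by (simp add: inner_vec_def)
    also have "\<dots> \<le> (\<Sum>j\<in>UNIV. \<bar>a$j * (u - u0)$j\<bar>)" by (rule sum_abs)
    also have "\<dots> \<le> (\<Sum>j\<in>UNIV. \<bar>a$j\<bar>)"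
    proof (rule sum_mono)
      fix j :: 'n
      have "\<bar>(u - u0)$j\<bar> \<le> 1" using u(1) u0(1) by (auto simp: unit_cube_def abs_le_iff) (smt (verit))+
      then have "\<bar>a$j\<bar> * \<bar>(u - u0)$j\<bar> \<le> \<bar>a$j\<bar> * 1" by (intro mult_left_mono) auto
      then show "\<bar>a$j * (u - u0)$j\<bar> \<le> \<bar>a$j\<bar>" by (simp add: abs_mult)
    qed
    also have "\<dots> \<le> d * \<bar>a$i0\<bar>" by (rule suma)
    finally show ?thesis .
  qed
  have "a \<bullet> x - a \<bullet> x0 = e * (a \<bullet> (u - u0)) + a \<bullet> (c - c0)"
    by (simp add: xu xu0 inner_diff_right inner_add_right algebra_simps)
  then have eq: "a$i0 * (c$i0 - c0$i0) = (a \<bullet> x - b) - (a \<bullet> x0 - b) - e * (a \<bullet> (u - u0))"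
    using ac by simp
  have "\<bar>e * (a \<bullet> (u - u0))\<bar> \<le> e * (d * \<bar>a$i0\<bar>)"
    using au e0 by (simp add: abs_mult mult_left_mono)
  then have "\<bar>a$i0 * (c$i0 - c0$i0)\<bar> \<le> norm a * e + norm a * e + e * (d * \<bar>a$i0\<bar>)"
    using eq ax ax0 by linarith
  also have "\<dots> \<le> \<bar>a$i0\<bar> * (3 * d * e)"
    using na e0 mult_right_mono[OF na, of e] by (simp add: algebra_simps)
  finally have "\<bar>a$i0\<bar> * \<bar>c$i0 - c0$i0\<bar> \<le> \<bar>a$i0\<bar> * (3 * d * e)" by (simp add: abs_mult)
  then have "\<bar>c$i0 - c0$i0\<bar> \<le> 3 * d * e" using apos by simp
  then show ?thesis by (simp add: c_def c0_def d_def e_def)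
qed

lemma finite_digits: "finite (digits :: (real^'n) set)"
proof -
  have "digits \<subseteq> (\<lambda>f. \<chi> i. f i) ` (PiE (UNIV :: 'n set) (\<lambda>_. {0::real, 2}))"
  proof
    fix v :: "real^'n" assume "v \<in> digits"
    then have "(\<lambda>i. v $ i) \<in> PiE UNIV (\<lambda>_. {0::real, 2})" by (auto simp: digits_def)
    moreover have "v = (\<chi> i. (\<lambda>i. v $ i) i)" by simp
    ultimately show "v \<in> (\<lambda>f. \<chi> i. f i) ` (PiE (UNIV :: 'n set) (\<lambda>_. {0::real, 2}))" by blast
  qed
  moreover have "finite (PiE (UNIV :: 'n set) (\<lambda>_. {0::real, 2}))" by (rule finite_PiE) auto
  ultimately show ?thesis using finite_subset by blast
qed

lemma finite_words: "finite (words n :: (real^'n) list set)"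
proof -
  have "words n = {xs. set xs \<subseteq> (digits :: (real^'n) set) \<and> length xs = n}"
    by (auto simp: words_def)
  then show ?thesis using finite_lists_length_eq[OF finite_digits] by simp
qed

definition proj :: "'n \<Rightarrow> (real^'n) list \<Rightarrow> ('n \<Rightarrow> real) list" where
  "proj i0 w = map (\<lambda>v. restrict (\<lambda>j. v $ j) (UNIV - {i0})) w"

lemma proj_comp: "j \<noteq> i0 \<Longrightarrow> map (\<lambda>v. v $ j) w = map (\<lambda>f. f j) (proj i0 w)"
  by (simp add: proj_def)

lemma proj_reconstruct:
  assumes "length w = length w'" "map (\<lambda>v. v $ i0) w = map (\<lambda>v. v $ i0) w'"
    "proj i0 w = proj i0 w'"
  shows "w = w'"
proof (rule nth_equalityI)
  show "length w = length w'" by fact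
  fix k assume k: "k < length w"
  show "w ! k = w' ! k"
  proof (subst vec_eq_iff, rule allI)
    fix j
    show "w ! k $ j = w' ! k $ j"
    proof (cases "j = i0")
      case True
      then show ?thesis using assms(1,2) k nth_map[of k w "\<lambda>v. v $ i0"] nth_map[of k w' "\<lambda>v. v $ i0"]
        by simp
    next
      case False
      have "map (\<lambda>v. v $ j) w = map (\<lambda>v. v $ j) w'"
        using proj_comp[OF False] assms(3) by metis
      then show ?thesis using assms(1) k nth_map[of k w "\<lambda>v. v $ j"] nth_map[of k w' "\<lambda>v. v $ j"]
        by simp
    qed
  qed
qed

lemma words_digit_set: "w \<in> words n \<Longrightarrow> set (map (\<lambda>v. v $ i) w) \<subseteq> {0, 2}"
  by (auto simp: words_def digits_def)

lemma ival_close: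
  fixes a :: "real^'n" and w w0 :: "(real^'n) list"
  assumes amax: "\<And>j. \<bar>a$j\<bar> \<le> \<bar>a$i0\<bar>" and apos: "\<bar>a$i0\<bar> > 0"
  and ws: "w \<in> words n" "w0 \<in> words n"
  and pr: "proj i0 w = proj i0 w0"
  and m1: "x \<in> hword w ` unit_cube" "a \<bullet> y = b" "dist x y < (1/3)^n"
  and m2: "x0 \<in> hword w0 ` unit_cube" "a \<bullet> y0 = b" "dist x0 y0 < (1/3)^n"
  shows "\<bar>ival (map (\<lambda>v. v $ i0) w) - ival (map (\<lambda>v. v $ i0) w0)\<bar> \<le> 3 * CARD('n)"
proof -
  have lens: "length w = n" "length w0 = n" using ws by (auto simp: words_def)
  have same: "(hword w 0)$j = (hword w0 0)$j" if "j \<noteq> i0" for j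
    using proj_comp[OF that, of w] proj_comp[OF that, of w0] pr lens
    by (simp add: hword0_comp)
  have "\<bar>(hword w 0)$i0 - (hword w0 0)$i0\<bar> \<le> 3 * CARD('n) * (1/3)^n"
    by (rule key_geom[OF amax apos lens same m1 m2])
  then have "\<bar>ival (map (\<lambda>v. v $ i0) w) / 3^n - ival (map (\<lambda>v. v $ i0) w0) / 3^n\<bar> \<le> 3 * CARD('n) / 3^n"
    using lens by (simp add: hword0_comp power_one_over)
  then have "\<bar>ival (map (\<lambda>v. v $ i0) w) - ival (map (\<lambda>v. v $ i0) w0)\<bar> / 3^n \<le> 3 * CARD('n) / 3^n"
    by (simp add: diff_divide_distrib[symmetric])
  then show ?thesis by (simp add: divide_le_cancel)
qed

theorem mainTheorem6:
  shows "\<exists>C::real. \<forall>(L::(real ^ 'n) set) (n::nat). affine_hyperplane L \<longrightarrow>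
     (\<exists>W. W \<subseteq> words n \<and> finite W \<and>
        real (card W) \<le> C * 2 ^ ((CARD('n) - 1) * n) \<and>
        open_nbhd L ((1/3) ^ n) \<inter> cantor_d \<subseteq> (\<Union>w\<in>W. hword w ` unit_cube))"
proof -
  have "\<forall>(L::(real ^ 'n) set) (n::nat). affine_hyperplane L \<longrightarrow>
     (\<exists>W. W \<subseteq> words n \<and> finite W \<and>
        real (card W) \<le> real (6 * CARD('n) + 1) * 2 ^ ((CARD('n) - 1) * n) \<and>
        open_nbhd L ((1/3) ^ n) \<inter> cantor_d \<subseteq> (\<Union>w\<in>W. hword w ` unit_cube))"
  proof (intro allI impI)
  fix L :: "(real ^ 'n) set" and n :: nat
  assume "affine_hyperplane L"
  then obtain a b where ab: "a \<noteq> 0" "L = {x. a \<bullet> x = b}" by (auto simp: affine_hyperplane_def)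
  define d where "d = CARD('n)"
  define e :: real where "e = (1/3)^n"
  obtain i0 where amax: "\<And>j. \<bar>a$j\<bar> \<le> \<bar>a$i0\<bar>"
  proof -
    have "Max (range (\<lambda>j. \<bar>a$j\<bar>)) \<in> range (\<lambda>j. \<bar>a$j\<bar>)" by (rule Max_in) auto
    then obtain i0 where "\<bar>a$i0\<bar> = Max (range (\<lambda>j. \<bar>a$j\<bar>))" by (metis (no_types, lifting) imageE)
    moreover have "\<And>j. \<bar>a$j\<bar> \<le> Max (range (\<lambda>j. \<bar>a$j\<bar>))" by (rule Max_ge) auto
    ultimately show ?thesis using that by metis
  qed
  have apos: "\<bar>a$i0\<bar> > 0"
  proof -
    obtain j where "a$j \<noteq> 0" using ab(1) by (auto simp: vec_eq_iff)
    then show ?thesis using amax[of j] by linarith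
  qed
  define W where "W = {w \<in> words n. hword w ` unit_cube \<inter> open_nbhd L e \<noteq> {}}"
  have Wsub: "W \<subseteq> words n" by (auto simp: W_def)
  have finW: "finite W" using finite_subset[OF Wsub finite_words] .
  have cover: "open_nbhd L e \<inter> cantor_d \<subseteq> (\<Union>w\<in>W. hword w ` unit_cube)"
  proof
    fix x assume x: "x \<in> open_nbhd L e \<inter> cantor_d"
    then obtain w where "w \<in> words n" "x \<in> hword w ` unit_cube" unfolding cantor_d_def by blast
    then show "x \<in> (\<Union>w\<in>W. hword w ` unit_cube)" using x by (auto simp: W_def)
  qed
  have memW: "\<exists>x y. x \<in> hword w ` unit_cube \<and> a \<bullet> y = b \<and> dist x y < (1/3)^n" if "w \<in> W" for w
    using that ab(2) by (auto simp: W_def open_nbhd_def e_def)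
  define B where "B = PiE (UNIV - {i0}) (\<lambda>_. {0::real, 2})"
  define P where "P = proj i0 ` W"
  have cardB: "card B = 2 ^ (d - 1)"
    by (simp add: B_def card_PiE d_def card_Diff_singleton del: Suc_1 One_nat_def) (simp add: numeral_2_eq_2)
  have Psub: "P \<subseteq> {xs. set xs \<subseteq> B \<and> length xs = n}"
  proof
    fix xs assume "xs \<in> P"
    then obtain w where w: "w \<in> W" "xs = proj i0 w" by (auto simp: P_def)
    then have wd: "set w \<subseteq> digits" "length w = n" using Wsub by (auto simp: words_def)
    have "restrict (\<lambda>j. v $ j) (UNIV - {i0}) \<in> B" if "v \<in> set w" for v
      using wd(1) that unfolding B_def digits_def by auto
    then show "xs \<in> {xs. set xs \<subseteq> B \<and> length xs = n}" using w wd by (auto simp: proj_def)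
  qed
  have finB: "finite B" unfolding B_def by (rule finite_PiE) auto
  have cardP: "card P \<le> 2 ^ ((d - 1) * n)"
  proof -
    have "card P \<le> card {xs. set xs \<subseteq> B \<and> length xs = n}"
      by (rule card_mono[OF finite_lists_length_eq[OF finB] Psub])
    also have "\<dots> = 2 ^ ((d - 1) * n)" by (simp add: card_lists_length_eq[OF finB] cardB power_mult)
    finally show ?thesis .
  qed
  define F where "F p = {w \<in> W. proj i0 w = p}" for p
  have fib: "card (F p) \<le> 6 * d + 1" for p
  proof (cases "F p = {}")
    case True then show ?thesis by simp
  next
    case False
    then obtain w0 where w0: "w0 \<in> F p" by auto
    define g where "g w = \<lfloor>ival (map (\<lambda>v. v $ i0) w)\<rfloor> - \<lfloor>ival (map (\<lambda>v. v $ i0) w0)\<rfloor>" for w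
    have intv: "of_int \<lfloor>ival (map (\<lambda>v. v $ i0) w)\<rfloor> = ival (map (\<lambda>v. v $ i0) w)" if "w \<in> W" for w
    proof -
      have "ival (map (\<lambda>v. v $ i0) w) \<in> \<int>" using that Wsub words_digit_set ival_Ints by blast
      then show ?thesis by (metis Ints_cases floor_of_int)
    qed
    have w0W: "w0 \<in> W" using w0 by (auto simp: F_def)
    have inj: "inj_on g (F p)"
    proof
      fix w w' assume h: "w \<in> F p" "w' \<in> F p" "g w = g w'"
      then have wW: "w \<in> W" "w' \<in> W" by (auto simp: F_def)
      have "\<lfloor>ival (map (\<lambda>v. v $ i0) w)\<rfloor> = \<lfloor>ival (map (\<lambda>v. v $ i0) w')\<rfloor>" using h(3) by (simp add: g_def)
      then have "ival (map (\<lambda>v. v $ i0) w) = ival (map (\<lambda>v. v $ i0) w')" using intv wW by metis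
      moreover have "length w = n" "length w' = n" using wW Wsub by (auto simp: words_def)
      ultimately have "map (\<lambda>v. v $ i0) w = map (\<lambda>v. v $ i0) w'"
        using ival_inj words_digit_set wW Wsub by (metis length_map subsetD)
      moreover have "proj i0 w = proj i0 w'" using h by (auto simp: F_def)
      ultimately show "w = w'" using proj_reconstruct \<open>length w = n\<close> \<open>length w' = n\<close> by metis
    qed
    have img: "g ` F p \<subseteq> {- int (3 * d) .. int (3 * d)}"
    proof
      fix k assume "k \<in> g ` F p"
      then obtain w where w: "w \<in> F p" "k = g w" by auto
      then have wW: "w \<in> W" and pr: "proj i0 w = proj i0 w0" using w0 by (auto simp: F_def)
      obtain x y where m1: "x \<in> hword w ` unit_cube" "a \<bullet> y = b" "dist x y < (1/3)^n"
        using memW[OF wW] by blast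
      obtain x0 y0 where m2: "x0 \<in> hword w0 ` unit_cube" "a \<bullet> y0 = b" "dist x0 y0 < (1/3)^n"
        using memW[OF w0W] by blast
      have "\<bar>ival (map (\<lambda>v. v $ i0) w) - ival (map (\<lambda>v. v $ i0) w0)\<bar> \<le> 3 * CARD('n)"
        by (rule ival_close[OF amax apos _ _ pr m1 m2]) (use wW w0W Wsub in auto)
      then have "\<bar>real_of_int (g w)\<bar> \<le> real (3 * d)"
        using intv[OF wW] intv[OF w0W] unfolding g_def d_def by (simp only: of_int_diff of_nat_mult)
      then have "\<bar>g w\<bar> \<le> int (3 * d)" by linarith
      then show "k \<in> {- int (3 * d) .. int (3 * d)}" using w by auto
    qed
    have "card (F p) = card (g ` F p)" using card_image[OF inj] by simp
    also have "\<dots> \<le> card {- int (3 * d) .. int (3 * d)}" by (rule card_mono[OF _ img]) simp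
    also have "\<dots> = 6 * d + 1" by simp
    finally show ?thesis .
  qed
  have "W \<subseteq> (\<Union>p\<in>P. F p)" by (auto simp: P_def F_def)
  then have "card W \<le> card (\<Union>p\<in>P. F p)"
    by (intro card_mono) (auto simp: P_def F_def intro: finite_subset[OF _ finW])
  also have "\<dots> \<le> (\<Sum>p\<in>P. card (F p))" by (rule card_UN_le) (simp add: P_def finW)
  also have "\<dots> \<le> card P * (6 * d + 1)" using sum_bounded_above[of P "\<lambda>p. card (F p)" "6 * d + 1"] fib
    by simp
  also have "\<dots> \<le> 2 ^ ((d - 1) * n) * (6 * d + 1)" using cardP by (rule mult_right_mono) simp
  finally have "real (card W) \<le> real (6 * d + 1) * 2 ^ ((d - 1) * n)"
  proof -
    assume h: "card W \<le> 2 ^ ((d - 1) * n) * (6 * d + 1)"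
    have "real (card W) \<le> real (2 ^ ((d - 1) * n) * (6 * d + 1))" using h by (simp only: of_nat_le_iff)
    then show ?thesis by (simp add: algebra_simps)
  qed
  then show "\<exists>W. W \<subseteq> words n \<and> finite W \<and>
        real (card W) \<le> real (6 * CARD('n) + 1) * 2 ^ ((CARD('n) - 1) * n) \<and>
        open_nbhd L ((1/3) ^ n) \<inter> cantor_d \<subseteq> (\<Union>w\<in>W. hword w ` unit_cube)"
    using Wsub finW cover by (auto simp: d_def e_def)
  qed
  then show ?thesis by blast
qed

end
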